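(* Let $\mathcal L$ be a finite distributive lattice, $\mathcal I$ a poset ideal and $\mathcal J$ a poset coideal of $\mathcal L$ with $\mathcal I\cup\mathcal J=\mathcal L$ and $\mathcal I\cap\mathcal J=\emptyset$. Then the ideal $H_{\mathcal I}\cap H_{\mathcal J}$ is generated by the monomials $\mathrm{lcm}(u_p,u_q)$ with $p\in\mathcal J$, $q\in\mathcal I$ and $q$ a lower neighbor of $p$. In particular, all minimal generators of $H_{\mathcal I}\cap H_{\mathcal J}$ have degree $\operatorname{rank}\mathcal L+1$.
   Context: Let $P$ be the set of join-irreducible elements of $\mathcal L$ (elements with exactly one lower neighbor); for $p\in\mathcal L$ put $\ell(p)=\{q\in P:q\le p\}$. Let $K$ be a field, $S=K[x_p,y_p:p\in P]$ (all variables of degree 1), $u_q=\prod_{p\in\ell(q)}x_p\prod_{p\in P\setminus\ell(q)}y_p$ for $q\in\mathcal L$, and for $\mathcal S\subseteq\mathcal L$ let $H_{\mathcal S}=(u_q:q\in\mathcal S)$. Poset ideals are closed downward, poset coideals upward. $\operatorname{rank}\mathcal L$ is the common length of the maximal chains of $\mathcal L$. *)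

theory Defs
  imports Main "HOL-Library.Poly_Mapping"
begin

definition lower_nb :: "'a::order \<Rightarrow> 'a \<Rightarrow> bool" where
  "lower_nb q p \<longleftrightarrow> q < p \<and> \<not> (\<exists>z. q < z \<and> z < p)"

definition join_irr :: "'a::order set" where
  "join_irr = {p. card {q. lower_nb q p} = 1}"

definition poset_ideal :: "'a::order set \<Rightarrow> bool" where
  "poset_ideal I \<longleftrightarrow> (\<forall>x\<in>I. \<forall>y. y \<le> x \<longrightarrow> y \<in> I)"

definition poset_coideal :: "'a::order set \<Rightarrow> bool" where
  "poset_coideal J \<longleftrightarrow> (\<forall>x\<in>J. \<forall>y. x \<le> y \<longrightarrow> y \<in> J)"

definition is_chain :: "'a::order set \<Rightarrow> bool" where
  "is_chain C \<longleftrightarrow> (\<forall>x\<in>C. \<forall>y\<in>C. x \<le> y \<or> y \<le> x)"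

(* rank of a finite lattice: length (number of covering steps) of a longest chain;
   in a finite distributive lattice all maximal chains have this length *)
definition lat_rank :: "'a::{finite,order} itself \<Rightarrow> nat" where
  "lat_rank _ = Max {card C | C :: 'a set. is_chain C} - 1"

(* variables of S: Inl p = x_p, Inr p = y_p.  Monomials are exponent vectors
   ('a + 'a) \<Rightarrow>\<^sub>0 nat, polynomials are  (('a + 'a) \<Rightarrow>\<^sub>0 nat) \<Rightarrow>\<^sub>0 'k *)

definition ell :: "'a::order \<Rightarrow> 'a set" where
  "ell p = {q \<in> join_irr. q \<le> p}"

definition u_exp :: "'a::{finite,order} \<Rightarrow> ('a + 'a) \<Rightarrow>\<^sub>0 nat" where
  "u_exp q = Abs_poly_mapping (\<lambda>v. case v of
      Inl p \<Rightarrow> (if p \<in> ell q then 1 else 0)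
    | Inr p \<Rightarrow> (if p \<in> join_irr - ell q then 1 else 0))"

definition u_mon :: "'a::{finite,order} \<Rightarrow> (('a + 'a) \<Rightarrow>\<^sub>0 nat) \<Rightarrow>\<^sub>0 'k::field" where
  "u_mon q = Poly_Mapping.single (u_exp q) 1"

definition exp_lcm :: "('v \<Rightarrow>\<^sub>0 nat) \<Rightarrow> ('v \<Rightarrow>\<^sub>0 nat) \<Rightarrow> ('v \<Rightarrow>\<^sub>0 nat)" where
  "exp_lcm a b = Abs_poly_mapping (\<lambda>v. max (Poly_Mapping.lookup a v) (Poly_Mapping.lookup b v))"

definition ideal_gen :: "'r::comm_ring_1 set \<Rightarrow> 'r set" where
  "ideal_gen G = {x. \<exists>A f. finite A \<and> A \<subseteq> G \<and> x = (\<Sum>g\<in>A. f g * g)}"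

definition H :: "'a::{finite,order} set \<Rightarrow> ((('a + 'a) \<Rightarrow>\<^sub>0 nat) \<Rightarrow>\<^sub>0 'k::field) set" where
  "H S = ideal_gen (u_mon ` S)"

definition exp_dvd :: "('v \<Rightarrow>\<^sub>0 nat) \<Rightarrow> ('v \<Rightarrow>\<^sub>0 nat) \<Rightarrow> bool" where
  "exp_dvd a b \<longleftrightarrow> (\<forall>v. Poly_Mapping.lookup a v \<le> Poly_Mapping.lookup b v)"

definition min_mon_gens :: "(('v \<Rightarrow>\<^sub>0 nat) \<Rightarrow>\<^sub>0 'k::field) set \<Rightarrow> ('v \<Rightarrow>\<^sub>0 nat) set" where
  "min_mon_gens M = {e. Poly_Mapping.single e 1 \<in> M \<and>
      \<not> (\<exists>e'. e' \<noteq> e \<and> exp_dvd e' e \<and> Poly_Mapping.single e' 1 \<in> M)}"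

definition mon_deg :: "('v \<Rightarrow>\<^sub>0 nat) \<Rightarrow> nat" where
  "mon_deg e = (\<Sum>v\<in>Poly_Mapping.keys e. Poly_Mapping.lookup e v)"

end

theory Submission
  imports Defs
begin

unbundle lattice_syntax





lemma cover_below:
  fixes x r :: "'a::{finite,order}"
  assumes "x < r" shows "\<exists>c. x \<le> c \<and> lower_nb c r"
proof -
  obtain m where m: "m \<in> {z. x \<le> z \<and> z < r}" "\<forall>b\<in>{z. x \<le> z \<and> z < r}. m \<le> b \<longrightarrow> m = b"
    using finite_has_maximal[of "{z. x \<le> z \<and> z < r}"] assms by auto
  have m1: "x \<le> m" "m < r" using m(1) by auto
  have "\<not> (\<exists>z. m < z \<and> z < r)"
  proof
    assume "\<exists>z. m < z \<and> z < r"
    then obtain z where z: "m < z" "z < r" by blast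
    have "x \<le> z" using m1(1) z(1) by (meson less_imp_le order.trans)
    hence "m = z" using m(2) z by (simp add: less_imp_le)
    thus False using z(1) by simp
  qed
  hence "lower_nb m r" unfolding lower_nb_def using m1 by blast
  thus ?thesis using m1 by blast
qed

lemma join_irr_E:
  fixes r :: "'a::{finite,order}"
  assumes "r \<in> join_irr"
  obtains c where "{q. lower_nb q r} = {c}"
  using assms unfolding join_irr_def by (metis mem_Collect_eq card_1_singletonE)

lemma join_irr_sup:
  fixes r :: "'a::{finite,lattice}"
  assumes "r \<in> join_irr" "r = x \<squnion> y" shows "r = x \<or> r = y"
proof (rule ccontr)
  assume "\<not> (r = x \<or> r = y)"
  hence xr: "x < r" and yr: "y < r" using assms(2) by (auto simp: order.strict_iff_order)
  obtain c where c: "{q. lower_nb q r} = {c}" using join_irr_E assms(1) by blast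
  obtain c1 where "x \<le> c1" "lower_nb c1 r" using cover_below[OF xr] by blast
  hence "x \<le> c" using c by auto
  obtain c2 where "y \<le> c2" "lower_nb c2 r" using cover_below[OF yr] by blast
  hence "y \<le> c" using c by auto
  have "c < r" using c unfolding lower_nb_def by auto
  with \<open>x \<le> c\<close> \<open>y \<le> c\<close> assms(2) show False by (simp add: less_le_not_le)
qed

lemma join_prime:
  fixes r :: "'a::{finite,distrib_lattice}"
  assumes "r \<in> join_irr" "r \<le> a \<squnion> b" shows "r \<le> a \<or> r \<le> b"
proof -
  have "r = r \<sqinter> (a \<squnion> b)" using assms(2) by (simp add: inf_absorb1)
  also have "\<dots> = (r \<sqinter> a) \<squnion> (r \<sqinter> b)" by (rule inf_sup_distrib1)
  finally have "r = r \<sqinter> a \<or> r = r \<sqinter> b" using join_irr_sup[OF assms(1)] by blast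
  thus ?thesis by (metis inf.absorb_iff1)
qed

lemma join_prime_Sup_fin:
  fixes r :: "'a::{finite,distrib_lattice}"
  assumes "r \<in> join_irr" "finite A" "A \<noteq> {}" "r \<le> Sup_fin A" shows "\<exists>a\<in>A. r \<le> a"
  using assms(2,3,4)
proof (induction A rule: finite_ne_induct)
  case (singleton x) then show ?case by simp
next
  case (insert x F)
  then show ?case using join_prime[OF assms(1)] by auto
qed

lemma exists_ji:
  fixes a b :: "'a::{finite,lattice}"
  assumes "\<not> b \<le> a" shows "\<exists>r\<in>join_irr. r \<le> b \<and> \<not> r \<le> a"
proof -
  obtain r where r: "r \<in> {z. z \<le> b \<and> \<not> z \<le> a}" "\<forall>z\<in>{z. z \<le> b \<and> \<not> z \<le> a}. z \<le> r \<longrightarrow> r = z"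
    using finite_has_minimal[of "{z. z \<le> b \<and> \<not> z \<le> a}"] assms by auto
  have below: "z \<le> a" if zr: "z < r" for z
  proof (rule ccontr)
    assume za: "\<not> z \<le> a"
    have "r \<le> b" using r(1) by simp
    hence "z \<le> b" using zr by (meson less_imp_le order.trans)
    hence "r = z" using r(2) za zr by (simp add: less_imp_le)
    thus False using zr by simp
  qed
  have "r \<sqinter> a \<noteq> r"
  proof
    assume "r \<sqinter> a = r"
    hence "r \<le> a" by (metis inf_le2)
    thus False using r(1) by simp
  qed
  hence "r \<sqinter> a < r" by (simp add: order.strict_iff_order)
  then obtain x where x: "lower_nb x r" using cover_below by blast
  have "{q. lower_nb q r} = {x}"
  proof (rule ccontr)
    assume "{q. lower_nb q r} \<noteq> {x}"
    then obtain y where y: "lower_nb y r" "y \<noteq> x" using x by auto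
    have xr: "x < r" "y < r" using x y unfolding lower_nb_def by auto
    have "\<not> y \<le> x" using x y xr unfolding lower_nb_def by (auto simp: order.strict_iff_order)
    hence "x < x \<squnion> y" by (simp add: less_le_not_le)
    moreover have "x \<squnion> y \<le> r" using xr by (simp add: less_imp_le)
    ultimately have "x \<squnion> y = r" using x unfolding lower_nb_def using order.not_eq_order_implies_strict by blast
    moreover have "x \<squnion> y \<le> a" using below xr by (simp add: less_imp_le)
    ultimately have "r \<le> a" by simp
    thus False using r(1) by simp
  qed
  hence "r \<in> join_irr" unfolding join_irr_def by simp
  thus ?thesis using r(1) by blast
qed

lemma ell_mono: "a \<le> b \<Longrightarrow> ell a \<subseteq> ell b"
  unfolding ell_def by auto

lemma ell_inf: "ell (a \<sqinter> b) = ell a \<inter> ell (b::'a::lattice)"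
  unfolding ell_def by auto

lemma ell_sub: "ell a \<subseteq> join_irr" unfolding ell_def by auto

lemma ell_strict:
  fixes a b :: "'a::{finite,lattice}"
  assumes "a < b" shows "ell a \<subset> ell b"
proof -
  have "\<not> b \<le> a" using assms by (simp add: less_le_not_le)
  then obtain r where r: "r \<in> join_irr" "r \<le> b" "\<not> r \<le> a" using exists_ji by blast
  have "r \<in> ell b" "r \<notin> ell a" using r unfolding ell_def by auto
  moreover have "ell a \<subseteq> ell b" using ell_mono[of a b] assms by (simp add: less_imp_le)
  ultimately show ?thesis by blast
qed

lemma ell_cover:
  fixes p q :: "'a::{finite,distrib_lattice}"
  assumes "lower_nb q p" shows "ell q \<subseteq> ell p" "card (ell p) = Suc (card (ell q))"
proof -
  have qp: "q < p" using assms unfolding lower_nb_def by auto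
  show "ell q \<subseteq> ell p" using ell_mono[of q p] qp by auto
  obtain r where r: "r \<in> ell p - ell q" using ell_strict[OF qp] by auto
  have "ell p - ell q = {r}"
  proof -
    have "s = r" if s: "s \<in> ell p - ell q" for s
    proof -
      have "q < q \<squnion> r" using r unfolding ell_def by (auto simp: less_le_not_le)
      moreover have "q \<squnion> r \<le> p" using r qp unfolding ell_def by auto
      ultimately have e1: "q \<squnion> r = p" using assms unfolding lower_nb_def using order.not_eq_order_implies_strict by blast
      have "q < q \<squnion> s" using s unfolding ell_def by (auto simp: less_le_not_le)
      moreover have "q \<squnion> s \<le> p" using s qp unfolding ell_def by auto
      ultimately have e2: "q \<squnion> s = p" using assms unfolding lower_nb_def using order.not_eq_order_implies_strict by blast
      have s1: "s \<in> join_irr" "s \<le> p" "\<not> s \<le> q" using s unfolding ell_def by auto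
      have r1: "r \<in> join_irr" "r \<le> p" "\<not> r \<le> q" using r unfolding ell_def by auto
      have "s \<le> q \<squnion> r" using e1 s1(2) by simp
      hence "s \<le> q \<or> s \<le> r" by (rule join_prime[OF s1(1)])
      hence "s \<le> r" using s1(3) by blast
      moreover have "r \<le> q \<squnion> s" using e2 r1(2) by simp
      hence "r \<le> q \<or> r \<le> s" by (rule join_prime[OF r1(1)])
      hence "r \<le> s" using r1(3) by blast
      ultimately show ?thesis by simp
    qed
    thus ?thesis using r by blast
  qed
  hence "ell p = insert r (ell q)" "r \<notin> ell q" using \<open>ell q \<subseteq> ell p\<close> r by auto
  thus "card (ell p) = Suc (card (ell q))" by simp
qed





lemma chain_card_le:
  fixes C :: "'a::{finite,distrib_lattice} set"
  assumes "is_chain C" shows "card C \<le> Suc (card (join_irr :: 'a set))"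
proof -
  have lt: "card (ell c) < card (ell d)" if "c < d" for c d :: 'a
    using ell_strict[OF that] by (simp add: psubset_card_mono)
  have inj: "inj_on (\<lambda>c. card (ell c)) C"
  proof (rule inj_onI)
    fix c d assume cd: "c \<in> C" "d \<in> C" "card (ell c) = card (ell d)"
    show "c = d"
    proof (rule ccontr)
      assume ne: "c \<noteq> d"
      have "c \<le> d \<or> d \<le> c" using assms cd unfolding is_chain_def by blast
      hence "c < d \<or> d < c" using ne by (auto simp: order.strict_iff_order)
      thus False using lt cd(3) by (metis less_irrefl)
    qed
  qed
  have sub: "(\<lambda>c. card (ell c)) ` C \<subseteq> {..card (join_irr :: 'a set)}"
    using ell_sub by (auto intro!: card_mono)
  have "card C = card ((\<lambda>c. card (ell c)) ` C)" using inj by (simp add: card_image)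
  also have "\<dots> \<le> card {..card (join_irr :: 'a set)}" using sub by (intro card_mono) auto
  finally show ?thesis by simp
qed

lemma chain_exists:
  "\<exists>C :: 'a::{finite,distrib_lattice} set. is_chain C \<and> card C = Suc (card (join_irr :: 'a set))"
proof -
  define z0 :: 'a where "z0 = Inf_fin UNIV"
  have z0: "z0 \<le> x" for x unfolding z0_def by (rule Inf_fin.coboundedI) auto
  have main: "\<forall>S. S \<subseteq> (join_irr :: 'a set) \<longrightarrow> card S = n \<longrightarrow>
     (\<exists>C. is_chain C \<and> card C = Suc n \<and> (\<forall>c\<in>C. c \<le> Sup_fin (insert z0 S)))" for n
  proof (induction n)
    case 0
    show ?case
    proof (intro allI impI)
      fix S :: "'a set" assume "S \<subseteq> join_irr" "card S = 0"
      hence "S = {}" by simp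
      thus "\<exists>C. is_chain C \<and> card C = Suc 0 \<and> (\<forall>c\<in>C. c \<le> Sup_fin (insert z0 S))"
        by (intro exI[of _ "{z0}"]) (simp add: is_chain_def)
    qed
  next
    case (Suc n)
    show ?case
    proof (intro allI impI)
      fix S :: "'a set" assume S: "S \<subseteq> join_irr" "card S = Suc n"
      hence "S \<noteq> {}" by auto
      then obtain m where m: "m \<in> S" "\<forall>b\<in>S. m \<le> b \<longrightarrow> m = b"
        using finite_has_maximal[of S] by auto
      define S' where "S' = S - {m}"
      have S': "S' \<subseteq> join_irr" "card S' = n" using S m(1) unfolding S'_def by auto
      obtain C' where C': "is_chain C'" "card C' = Suc n" "\<forall>c\<in>C'. c \<le> Sup_fin (insert z0 S')"
        using Suc.IH S' by blast
      define b where "b = Sup_fin (insert z0 S')"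
      define t where "t = Sup_fin (insert z0 S)"
      have "insert z0 S = insert m (insert z0 S')" using m(1) unfolding S'_def by auto
      hence tb: "t = m \<squnion> b" unfolding t_def b_def by (simp add: Sup_fin.insert)
      have mji: "m \<in> join_irr" using S m by auto
      have nle: "\<not> m \<le> b"
      proof
        assume "m \<le> b"
        then obtain a where a: "a \<in> insert z0 S'" "m \<le> a"
          using join_prime_Sup_fin[OF mji, of "insert z0 S'"] unfolding b_def by auto
        show False
        proof (cases "a = z0")
          case True
          obtain c where c: "{q. lower_nb q m} = {c}" using join_irr_E[OF mji] by blast
          hence "c < m" unfolding lower_nb_def by auto
          moreover have "m \<le> c" using a True z0[of c] by (meson order.trans)
          ultimately show False by simp
        next
          case False
          hence "a \<in> S" "a \<noteq> m" using a(1) unfolding S'_def by auto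
          thus False using m(2) a(2) by blast
        qed
      qed
      have bt: "b \<le> t" using tb by simp
      have tnot: "t \<notin> C'"
      proof
        assume "t \<in> C'"
        hence "t \<le> b" using C'(3) unfolding b_def by blast
        hence "m \<le> b" using tb by simp
        thus False using nle by simp
      qed
      have allt: "\<forall>c\<in>insert t C'. c \<le> t" using C'(3) bt unfolding b_def by (auto intro: order.trans)
      have "is_chain (insert t C')" using C'(1) allt unfolding is_chain_def by blast
      moreover have "card (insert t C') = Suc (Suc n)" using tnot C'(2) by simp
      ultimately show "\<exists>C. is_chain C \<and> card C = Suc (Suc n) \<and> (\<forall>c\<in>C. c \<le> Sup_fin (insert z0 S))"
        using allt unfolding t_def by blast
    qed
  qed
  thus ?thesis by blast
qed

lemma lat_rank_eq: "lat_rank TYPE('a::{finite,distrib_lattice}) = card (join_irr :: 'a set)"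
proof -
  let ?A = "{card C |C :: 'a set. is_chain C}"
  have "?A = card ` {C :: 'a set. is_chain C}" by blast
  hence fin: "finite ?A" by simp
  have "Max ?A = Suc (card (join_irr :: 'a set))"
  proof (rule Max_eqI[OF fin])
    show "y \<le> Suc (card (join_irr :: 'a set))" if "y \<in> ?A" for y using that chain_card_le by auto
    show "Suc (card (join_irr :: 'a set)) \<in> ?A" using chain_exists by (metis (mono_tags, lifting) mem_Collect_eq)
  qed
  thus ?thesis unfolding lat_rank_def by simp
qed




definition MI :: "('v \<Rightarrow>\<^sub>0 nat) set \<Rightarrow> (('v \<Rightarrow>\<^sub>0 nat) \<Rightarrow>\<^sub>0 'k::field) set" where
  "MI G = {f. \<forall>m\<in>Poly_Mapping.keys f. \<exists>g\<in>G. exp_dvd g m}"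

lemma exp_dvd_add: "exp_dvd e (a + e)"
  unfolding exp_dvd_def by (simp add: lookup_add)

lemma exp_dvd_refl: "exp_dvd e e"
  unfolding exp_dvd_def by simp

lemma exp_dvd_trans: "exp_dvd a b \<Longrightarrow> exp_dvd b c \<Longrightarrow> exp_dvd a c"
  unfolding exp_dvd_def by (meson order.trans)

lemma lookup_exp_lcm:
  "Poly_Mapping.lookup (exp_lcm a b) v = max (Poly_Mapping.lookup a v) (Poly_Mapping.lookup b v)"
proof -
  have "{v. max (Poly_Mapping.lookup a v) (Poly_Mapping.lookup b v) \<noteq> 0}
        \<subseteq> {v. Poly_Mapping.lookup a v \<noteq> 0} \<union> {v. Poly_Mapping.lookup b v \<noteq> 0}" by auto
  hence "finite {v. max (Poly_Mapping.lookup a v) (Poly_Mapping.lookup b v) \<noteq> 0}"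
    by (rule finite_subset) simp
  thus ?thesis unfolding exp_lcm_def by simp
qed

lemma exp_dvd_lcm1: "exp_dvd a (exp_lcm a b)"
  unfolding exp_dvd_def lookup_exp_lcm by simp
lemma exp_dvd_lcm2: "exp_dvd b (exp_lcm a b)"
  unfolding exp_dvd_def lookup_exp_lcm by simp
lemma exp_lcm_least: "exp_dvd a m \<Longrightarrow> exp_dvd b m \<Longrightarrow> exp_dvd (exp_lcm a b) m"
  unfolding exp_dvd_def lookup_exp_lcm by simp

lemma exp_diff_add: "exp_dvd g m \<Longrightarrow> (m - g) + g = (m :: 'v \<Rightarrow>\<^sub>0 nat)"
  unfolding exp_dvd_def by (intro poly_mapping_eqI) (simp add: lookup_add lookup_minus)

lemma sum_monomials:
  "(\<Sum>m\<in>Poly_Mapping.keys f. Poly_Mapping.single m (Poly_Mapping.lookup f m)) = f"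
proof (rule poly_mapping_eqI)
  fix k
  have "Poly_Mapping.lookup (\<Sum>m\<in>Poly_Mapping.keys f. Poly_Mapping.single m (Poly_Mapping.lookup f m)) k
     = (\<Sum>m\<in>Poly_Mapping.keys f. if m = k then Poly_Mapping.lookup f m else 0)"
    by (simp add: lookup_sum lookup_single when_def)
  also have "\<dots> = Poly_Mapping.lookup f k" by (simp add: in_keys_iff)
  finally show "Poly_Mapping.lookup (\<Sum>m\<in>Poly_Mapping.keys f. Poly_Mapping.single m (Poly_Mapping.lookup f m)) k
     = Poly_Mapping.lookup f k" .
qed

lemma ideal_gen_MI:
  "ideal_gen ((\<lambda>e. Poly_Mapping.single e (1::'k::field)) ` G) = (MI G :: (('v \<Rightarrow>\<^sub>0 nat) \<Rightarrow>\<^sub>0 'k) set)"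
proof
  show "ideal_gen ((\<lambda>e. Poly_Mapping.single e (1::'k::field)) ` G) \<subseteq> MI G"
  proof
    fix x assume "x \<in> ideal_gen ((\<lambda>e. Poly_Mapping.single e (1::'k::field)) ` G)"
    then obtain A f where A: "finite A" "A \<subseteq> (\<lambda>e. Poly_Mapping.single e (1::'k::field)) ` G"
      and x: "x = (\<Sum>g\<in>A. f g * g)" unfolding ideal_gen_def by blast
    show "x \<in> MI G" unfolding MI_def
    proof (intro CollectI ballI)
      fix m assume "m \<in> Poly_Mapping.keys x"
      then obtain g where g: "g \<in> A" "m \<in> Poly_Mapping.keys (f g * g)"
        using keys_sum[of "\<lambda>g. f g * g" A] x by blast
      obtain e where e: "e \<in> G" "g = Poly_Mapping.single e 1" using A(2) g(1) by blast
      have "m \<in> {a + b | a b. a \<in> Poly_Mapping.keys (f g) \<and> b \<in> Poly_Mapping.keys g}"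
        using keys_mult g(2) by blast
      then obtain a where "m = a + e" using e(2) by auto
      thus "\<exists>g\<in>G. exp_dvd g m" using e(1) exp_dvd_add by blast
    qed
  qed
next
  show "MI G \<subseteq> ideal_gen ((\<lambda>e. Poly_Mapping.single e (1::'k::field)) ` G)"
  proof
    fix f :: "('v \<Rightarrow>\<^sub>0 nat) \<Rightarrow>\<^sub>0 'k" assume "f \<in> MI G"
    hence "\<forall>m\<in>Poly_Mapping.keys f. \<exists>g. g \<in> G \<and> exp_dvd g m" unfolding MI_def by blast
    then obtain gm where gm: "\<And>m. m \<in> Poly_Mapping.keys f \<Longrightarrow> gm m \<in> G \<and> exp_dvd (gm m) m"
      by metis
    define h where "h = (\<lambda>m. Poly_Mapping.single (gm m) (1::'k))"
    define A where "A = h ` Poly_Mapping.keys f"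
    define F where "F = (\<lambda>p. \<Sum>m\<in>{m \<in> Poly_Mapping.keys f. h m = p}.
        Poly_Mapping.single (m - gm m) (Poly_Mapping.lookup f m))"
    have "(\<Sum>p\<in>A. F p * p) = (\<Sum>p\<in>A. \<Sum>m\<in>{m \<in> Poly_Mapping.keys f. h m = p}.
        Poly_Mapping.single (m - gm m) (Poly_Mapping.lookup f m) * h m)"
      unfolding F_def sum_distrib_right by (intro sum.cong refl) auto
    also have "\<dots> = (\<Sum>m\<in>Poly_Mapping.keys f. Poly_Mapping.single (m - gm m) (Poly_Mapping.lookup f m) * h m)"
      by (rule sum.group) (auto simp: A_def)
    also have "\<dots> = (\<Sum>m\<in>Poly_Mapping.keys f. Poly_Mapping.single m (Poly_Mapping.lookup f m))"
      by (intro sum.cong refl) (simp add: h_def mult_single exp_diff_add gm)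
    also have "\<dots> = f" by (rule sum_monomials)
    finally have "f = (\<Sum>p\<in>A. F p * p)" by simp
    moreover have "finite A" "A \<subseteq> (\<lambda>e. Poly_Mapping.single e (1::'k::field)) ` G"
      unfolding A_def h_def using gm by auto
    ultimately show "f \<in> ideal_gen ((\<lambda>e. Poly_Mapping.single e (1::'k::field)) ` G)"
      unfolding ideal_gen_def by blast
  qed
qed

lemma MI_inter:
  assumes "\<And>a b. a \<in> A \<Longrightarrow> b \<in> B \<Longrightarrow> \<exists>c\<in>C. exp_dvd c (exp_lcm a b)"
    and "\<And>c. c \<in> C \<Longrightarrow> \<exists>a\<in>A. \<exists>b\<in>B. exp_dvd a c \<and> exp_dvd b c"
  shows "MI A \<inter> MI B = (MI C :: (('v \<Rightarrow>\<^sub>0 nat) \<Rightarrow>\<^sub>0 'k::field) set)"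
proof
  show "MI A \<inter> MI B \<subseteq> (MI C :: (('v \<Rightarrow>\<^sub>0 nat) \<Rightarrow>\<^sub>0 'k::field) set)"
  proof
    fix f :: "('v \<Rightarrow>\<^sub>0 nat) \<Rightarrow>\<^sub>0 'k" assume f: "f \<in> MI A \<inter> MI B"
    show "f \<in> MI C" unfolding MI_def
    proof (intro CollectI ballI)
      fix m assume m: "m \<in> Poly_Mapping.keys f"
      obtain a where a: "a \<in> A" "exp_dvd a m" using f m unfolding MI_def by blast
      obtain b where b: "b \<in> B" "exp_dvd b m" using f m unfolding MI_def by blast
      obtain c where c: "c \<in> C" "exp_dvd c (exp_lcm a b)" using assms(1)[OF a(1) b(1)] by blast
      have "exp_dvd c m" using exp_dvd_trans[OF c(2) exp_lcm_least[OF a(2) b(2)]] .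
      thus "\<exists>g\<in>C. exp_dvd g m" using c(1) by blast
    qed
  qed
next
  show "(MI C :: (('v \<Rightarrow>\<^sub>0 nat) \<Rightarrow>\<^sub>0 'k::field) set) \<subseteq> MI A \<inter> MI B"
  proof
    fix f :: "('v \<Rightarrow>\<^sub>0 nat) \<Rightarrow>\<^sub>0 'k" assume f: "f \<in> MI C"
    have "\<forall>m\<in>Poly_Mapping.keys f. (\<exists>g\<in>A. exp_dvd g m) \<and> (\<exists>g\<in>B. exp_dvd g m)"
    proof
      fix m assume m: "m \<in> Poly_Mapping.keys f"
      obtain c where c: "c \<in> C" "exp_dvd c m" using f m unfolding MI_def by blast
      obtain a b where ab: "a \<in> A" "b \<in> B" "exp_dvd a c" "exp_dvd b c" using assms(2)[OF c(1)] by blast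
      show "(\<exists>g\<in>A. exp_dvd g m) \<and> (\<exists>g\<in>B. exp_dvd g m)"
        using ab c(2) exp_dvd_trans by blast
    qed
    thus "f \<in> MI A \<inter> MI B" unfolding MI_def by blast
  qed
qed

lemma min_gens_MI:
  assumes "e \<in> min_mon_gens (MI C :: (('v \<Rightarrow>\<^sub>0 nat) \<Rightarrow>\<^sub>0 'k::field) set)"
  shows "e \<in> C"
proof -
  have e1: "Poly_Mapping.single e (1::'k) \<in> MI C"
    and e2: "\<not> (\<exists>e'. e' \<noteq> e \<and> exp_dvd e' e \<and> Poly_Mapping.single e' (1::'k) \<in> MI C)"
    using assms unfolding min_mon_gens_def by blast+
  obtain c where c: "c \<in> C" "exp_dvd c e" using e1 unfolding MI_def by auto
  have "Poly_Mapping.single c (1::'k) \<in> MI C" using c(1) exp_dvd_refl unfolding MI_def by auto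
  hence "c = e" using e2 c(2) by blast
  thus ?thesis using c(1) by simp
qed





lemma lookup_u_exp:
  "Poly_Mapping.lookup (u_exp q) v = (case v of Inl p \<Rightarrow> (if p \<in> ell q then 1 else 0)
      | Inr p \<Rightarrow> (if p \<in> join_irr - ell q then 1 else 0))"
  unfolding u_exp_def by (rule fun_cong[OF lookup_Abs_poly_mapping]) simp

lemma exp_lcm_comm: "exp_lcm a b = exp_lcm b a"
  by (intro poly_mapping_eqI) (simp add: lookup_exp_lcm max.commute)

lemma cover_step:
  fixes I J :: "'a::{finite,distrib_lattice} set"
  assumes "I \<union> J = UNIV" "I \<inter> J = {}" "a \<le> b" "a \<in> I" "b \<in> J"
  shows "\<exists>p q. p \<in> J \<and> q \<in> I \<and> lower_nb q p \<and> a \<le> q \<and> p \<le> b"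
proof -
  have aJ: "a \<notin> J" using assms by blast
  obtain p where p: "p \<in> {z \<in> J. a \<le> z \<and> z \<le> b}" "\<forall>z\<in>{z \<in> J. a \<le> z \<and> z \<le> b}. z \<le> p \<longrightarrow> p = z"
  proof -
    have "finite {z \<in> J. a \<le> z \<and> z \<le> b}" by simp
    moreover have "b \<in> {z \<in> J. a \<le> z \<and> z \<le> b}" using assms(3,5) by simp
    ultimately show ?thesis using that finite_has_minimal[of "{z \<in> J. a \<le> z \<and> z \<le> b}"] by blast
  qed
  have p1: "p \<in> J" "a \<le> p" "p \<le> b" using p(1) by auto
  have "a \<noteq> p" using aJ p1(1) by blast
  hence "a < p" using p1(2) by (simp add: order.strict_iff_order)
  then obtain c where c: "a \<le> c" "lower_nb c p" using cover_below by blast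
  have cp: "c < p" using c(2) unfolding lower_nb_def by blast
  have "c \<notin> J"
  proof
    assume cJ: "c \<in> J"
    have "c \<le> b" using cp p1(3) by (meson less_imp_le order.trans)
    hence "p = c" using p(2) cJ c(1) cp by (simp add: less_imp_le)
    thus False using cp by simp
  qed
  hence "c \<in> I" using assms(1) by blast
  thus ?thesis using p1 c by blast
qed

lemma lcm_dvd_cover:
  fixes I J :: "'a::{finite,distrib_lattice} set"
  assumes "poset_ideal I" "I \<union> J = UNIV" "I \<inter> J = {}" "q0 \<in> I" "p0 \<in> J"
  shows "\<exists>c\<in>{exp_lcm (u_exp p) (u_exp q) | p q. p \<in> J \<and> q \<in> I \<and> lower_nb q p}.
            exp_dvd c (exp_lcm (u_exp p0) (u_exp q0))"
proof -
  have aI: "p0 \<sqinter> q0 \<in> I" using assms(1,4) unfolding poset_ideal_def by simp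
  obtain p q where pq: "p \<in> J" "q \<in> I" "lower_nb q p" "p0 \<sqinter> q0 \<le> q" "p \<le> p0"
    using cover_step[OF assms(2,3) _ aI assms(5)] by auto
  have h1: "ell q \<subseteq> ell p" using ell_cover(1)[OF pq(3)] .
  have h2: "ell p \<subseteq> ell p0" using ell_mono[OF pq(5)] .
  have h3: "ell p0 \<inter> ell q0 \<subseteq> ell q" using ell_mono[OF pq(4)] ell_inf[of p0 q0] by simp
  have "exp_dvd (exp_lcm (u_exp p) (u_exp q)) (exp_lcm (u_exp p0) (u_exp q0))"
    unfolding exp_dvd_def
  proof
    fix v :: "'a + 'a"
    show "Poly_Mapping.lookup (exp_lcm (u_exp p) (u_exp q)) v \<le> Poly_Mapping.lookup (exp_lcm (u_exp p0) (u_exp q0)) v"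
    proof (cases v)
      case (Inl r)
      show ?thesis unfolding Inl lookup_exp_lcm lookup_u_exp sum.case
        using h1 h2 h3 by (cases "r \<in> ell p"; cases "r \<in> ell q0"; simp) blast+
    next
      case (Inr r)
      show ?thesis unfolding Inr lookup_exp_lcm lookup_u_exp sum.case
        using h1 h2 h3 by (cases "r \<in> ell q"; cases "r \<in> ell q0"; cases "r \<in> join_irr"; simp) blast+
    qed
  qed
  moreover have "exp_lcm (u_exp p) (u_exp q) \<in> {exp_lcm (u_exp p) (u_exp q) | p q. p \<in> J \<and> q \<in> I \<and> lower_nb q p}"
    using pq(1-3) by blast
  ultimately show ?thesis by (rule bexI)
qed

lemma sum_ind_univ: "(\<Sum>r\<in>(UNIV::'a::finite set). if r \<in> A then (1::nat) else 0) = card A"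
  by (simp add: sum.If_cases)

lemma deg_cover:
  fixes p q :: "'a::{finite,distrib_lattice}"
  assumes "lower_nb q p"
  shows "mon_deg (exp_lcm (u_exp p) (u_exp q)) = card (join_irr :: 'a set) + 1"
proof -
  let ?e = "exp_lcm (u_exp p) (u_exp q)"
  have h1: "ell q \<subseteq> ell p" and h2: "card (ell p) = Suc (card (ell q))" using ell_cover[OF assms] by auto
  have h3: "ell p \<subseteq> join_irr" by (rule ell_sub)
  have "mon_deg ?e = (\<Sum>v\<in>UNIV. Poly_Mapping.lookup ?e v)"
    unfolding mon_deg_def by (rule sum.mono_neutral_left) (auto simp: in_keys_iff)
  also have "\<dots> = (\<Sum>r\<in>UNIV. Poly_Mapping.lookup ?e (Inl r)) + (\<Sum>r\<in>UNIV. Poly_Mapping.lookup ?e (Inr r))"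
    by (subst UNIV_Plus_UNIV[symmetric], subst sum.Plus) (auto simp: comp_def)
  also have "(\<Sum>r\<in>UNIV. Poly_Mapping.lookup ?e (Inl r)) = (\<Sum>r\<in>UNIV. if r \<in> ell p then 1 else 0)"
    unfolding lookup_exp_lcm lookup_u_exp using h1 by (intro sum.cong refl) auto
  also have "\<dots> = card (ell p)" by (rule sum_ind_univ)
  also have "(\<Sum>r\<in>UNIV. Poly_Mapping.lookup ?e (Inr r)) = (\<Sum>r\<in>UNIV. if r \<in> join_irr - ell q then 1 else 0)"
    unfolding lookup_exp_lcm lookup_u_exp using h1 by (intro sum.cong refl) auto
  also have "\<dots> = card (join_irr - ell q)" by (rule sum_ind_univ)
  also have "\<dots> = card (join_irr :: 'a set) - card (ell q)" using h1 h3 by (simp add: card_Diff_subset)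
  finally show ?thesis using h2 card_mono[OF _ h3] by simp
qed

lemma H_MI: "(H S :: ((('a::{finite,order} + 'a) \<Rightarrow>\<^sub>0 nat) \<Rightarrow>\<^sub>0 'k::field) set) = MI (u_exp ` S)"
proof -
  have "(u_mon ` S :: ((('a + 'a) \<Rightarrow>\<^sub>0 nat) \<Rightarrow>\<^sub>0 'k) set) = (\<lambda>e. Poly_Mapping.single e 1) ` (u_exp ` S)"
    by (simp add: u_mon_def image_image)
  thus ?thesis unfolding H_def by (simp add: ideal_gen_MI)
qed

theorem lemma3p11:
  fixes I J :: "'a::{finite,distrib_lattice} set"
  assumes "poset_ideal I" and "poset_coideal J"
    and "I \<union> J = UNIV" and "I \<inter> J = {}"
  shows "(H I \<inter> H J :: ((('a + 'a) \<Rightarrow>\<^sub>0 nat) \<Rightarrow>\<^sub>0 'k::field) set)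
           = ideal_gen {Poly_Mapping.single (exp_lcm (u_exp p) (u_exp q)) 1 | p q. p \<in> J \<and> q \<in> I \<and> lower_nb q p}
    \<and> (\<forall>e \<in> min_mon_gens (H I \<inter> H J :: ((('a + 'a) \<Rightarrow>\<^sub>0 nat) \<Rightarrow>\<^sub>0 'k::field) set).
           mon_deg e = lat_rank TYPE('a) + 1)"
proof -
  define G3 where "G3 = {exp_lcm (u_exp p) (u_exp q) | p q. p \<in> J \<and> q \<in> I \<and> lower_nb q p}"
  have gens: "{Poly_Mapping.single (exp_lcm (u_exp p) (u_exp q)) (1::'k) | p q. p \<in> J \<and> q \<in> I \<and> lower_nb q p}
      = (\<lambda>e. Poly_Mapping.single e 1) ` G3" unfolding G3_def by blast
  have inter: "(H I \<inter> H J :: ((('a + 'a) \<Rightarrow>\<^sub>0 nat) \<Rightarrow>\<^sub>0 'k::field) set) = MI G3"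
    unfolding H_MI
  proof (rule MI_inter)
    fix a b assume a: "a \<in> u_exp ` I" and b: "b \<in> u_exp ` J"
    then obtain q0 p0 where "q0 \<in> I" "p0 \<in> J" "a = u_exp q0" "b = u_exp p0" by blast
    hence "exp_lcm a b = exp_lcm (u_exp p0) (u_exp q0)" using exp_lcm_comm by simp
    thus "\<exists>c\<in>G3. exp_dvd c (exp_lcm a b)"
      using lcm_dvd_cover[OF assms(1,3,4) \<open>q0 \<in> I\<close> \<open>p0 \<in> J\<close>] unfolding G3_def by simp
  next
    fix c assume "c \<in> G3"
    then obtain p q where "p \<in> J" "q \<in> I" "c = exp_lcm (u_exp p) (u_exp q)" unfolding G3_def by blast
    hence "u_exp q \<in> u_exp ` I" "u_exp p \<in> u_exp ` J" "exp_dvd (u_exp q) c" "exp_dvd (u_exp p) c"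
      using exp_dvd_lcm1[of "u_exp p" "u_exp q"] exp_dvd_lcm2[of "u_exp q" "u_exp p"] by simp_all
    thus "\<exists>a\<in>u_exp ` I. \<exists>b\<in>u_exp ` J. exp_dvd a c \<and> exp_dvd b c" by blast
  qed
  show ?thesis
  proof
    show "(H I \<inter> H J :: ((('a + 'a) \<Rightarrow>\<^sub>0 nat) \<Rightarrow>\<^sub>0 'k::field) set)
           = ideal_gen {Poly_Mapping.single (exp_lcm (u_exp p) (u_exp q)) 1 | p q. p \<in> J \<and> q \<in> I \<and> lower_nb q p}"
      unfolding inter gens ideal_gen_MI ..
    show "\<forall>e \<in> min_mon_gens (H I \<inter> H J :: ((('a + 'a) \<Rightarrow>\<^sub>0 nat) \<Rightarrow>\<^sub>0 'k::field) set).
           mon_deg e = lat_rank TYPE('a) + 1"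
    proof
      fix e assume "e \<in> min_mon_gens (H I \<inter> H J :: ((('a + 'a) \<Rightarrow>\<^sub>0 nat) \<Rightarrow>\<^sub>0 'k::field) set)"
      hence "e \<in> G3" unfolding inter by (rule min_gens_MI)
      then obtain p q where "lower_nb q p" "e = exp_lcm (u_exp p) (u_exp q)" unfolding G3_def by blast
      thus "mon_deg e = lat_rank TYPE('a) + 1" using deg_cover lat_rank_eq[where 'a='a] by simp
    qed
  qed
qed



end
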